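(* Let $v_0>0$, let $S$ be a finite nonempty index set, let $x_i\in\mathbb R^d$ with $\|x_i\|_2\le1$ for $i\in S$, and let $(y_i)_{i\in S\cup\{0\}}\in\{0,1\}^{S\cup\{0\}}$ with $\sum_i y_i=1$. Define $$\ell(\mathbf w)=-\sum_{i\in S\cup\{0\}}y_i\log p(i\mid\mathbf w),\quad p(i\mid\mathbf w)=\frac{e^{x_i^\top\mathbf w}}{v_0+\sum_{j\in S}e^{x_j^\top\mathbf w}}\ (i\in S),\quad p(0\mid\mathbf w)=\frac{v_0}{v_0+\sum_{j\in S}e^{x_j^\top\mathbf w}}.$$ Then $\ell$ is $3\sqrt2$-self-concordant-like: for all $\mathbf a,\mathbf b\in\mathbb R^d$, the function $\phi(s)=\ell(\mathbf a+s\mathbf b)$ satisfies $|\phi'''(s)|\le 3\sqrt2\,\|\mathbf b\|_2\,\phi''(s)$ for all $s\in\mathbb R$. In particular the constant does not depend on $|S|$. *)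

theory Defs
  imports "HOL-Analysis.Analysis"
begin

text \<open>Labels: None stands for the outside option 0, Some i for i in S.\<close>

definition mnl_prob ::
  "real \<Rightarrow> 'i set \<Rightarrow> ('i \<Rightarrow> 'a::euclidean_space) \<Rightarrow> 'a \<Rightarrow> 'i option \<Rightarrow> real" where
  "mnl_prob v0 S x w k =
     (case k of
        None \<Rightarrow> v0 / (v0 + (\<Sum>j\<in>S. exp (x j \<bullet> w)))
      | Some i \<Rightarrow> exp (x i \<bullet> w) / (v0 + (\<Sum>j\<in>S. exp (x j \<bullet> w))))"

definition mnl_loss ::
  "real \<Rightarrow> 'i set \<Rightarrow> ('i \<Rightarrow> 'a::euclidean_space) \<Rightarrow> ('i option \<Rightarrow> real) \<Rightarrow> 'a \<Rightarrow> real" where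
  "mnl_loss v0 S x y w =
     - (\<Sum>k\<in>insert None (Some ` S). y k * ln (mnl_prob v0 S x w k))"

definition self_concordant_like :: "real \<Rightarrow> ('a::real_normed_vector \<Rightarrow> real) \<Rightarrow> bool" where
  "self_concordant_like M f \<longleftrightarrow>
     (\<forall>a b s. \<bar>(deriv ^^ 3) (\<lambda>t. f (a + t *\<^sub>R b)) s\<bar>
                \<le> M * norm b * (deriv ^^ 2) (\<lambda>t. f (a + t *\<^sub>R b)) s)"

end

theory Submission
  imports Defs
begin

definition Zf :: "real \<Rightarrow> 'i set \<Rightarrow> ('i \<Rightarrow> real) \<Rightarrow> ('i \<Rightarrow> real) \<Rightarrow> nat \<Rightarrow> real \<Rightarrow> real" where
  "Zf v0 S c d k t = (if k = 0 then v0 else 0) + (\<Sum>j\<in>S. d j ^ k * exp (c j + t * d j))"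

lemma Zf_deriv: "(Zf v0 S c d k has_real_derivative Zf v0 S c d (Suc k) t) (at t)"
  unfolding Zf_def[abs_def]
  by (auto intro!: derivative_eq_intros sum.cong simp: algebra_simps)

lemma Zf0_pos: assumes "v0 > 0" shows "Zf v0 S c d 0 t > 0"
proof -
  have "(\<Sum>j\<in>S. exp (c j + t * d j)) \<ge> 0" by (intro sum_nonneg) auto
  thus ?thesis using assms unfolding Zf_def by simp
qed

lemma deriv_Zf: "deriv (Zf v0 S c d k) = Zf v0 S c d (Suc k)"
  using Zf_deriv DERIV_imp_deriv by blast

lemma derivs:
  fixes S :: "'i set" and c d :: "'i \<Rightarrow> real" and \<alpha> \<beta> :: real
  assumes v0: "v0 > 0"
  defines "Z \<equiv> Zf v0 S c d"
  shows "deriv (\<lambda>t. ln (Z 0 t) + \<alpha> + \<beta> * t) = (\<lambda>t. Z 1 t / Z 0 t + \<beta>)"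
    and "deriv (\<lambda>t. Z 1 t / Z 0 t + \<beta>) = (\<lambda>t. (Z 2 t * Z 0 t - Z 1 t * Z 1 t) / (Z 0 t)^2)"
    and "deriv (\<lambda>t. (Z 2 t * Z 0 t - Z 1 t * Z 1 t) / (Z 0 t)^2)
          = (\<lambda>t. (Z 3 t * (Z 0 t)^2 - 3 * Z 0 t * Z 1 t * Z 2 t + 2 * (Z 1 t)^3) / (Z 0 t)^3)"
proof -
  have pos: "\<And>t. Z 0 t > 0" unfolding Z_def using Zf0_pos[OF v0] by blast
  have D: "\<And>k t. (Z k has_real_derivative Z (Suc k) t) (at t)" unfolding Z_def by (rule Zf_deriv)
  have D0: "\<And>t. (Z 0 has_real_derivative Z 1 t) (at t)" using D[of 0] by simp
  have D1: "\<And>t. (Z 1 has_real_derivative Z 2 t) (at t)" using D[of 1] by (simp add: numeral_2_eq_2)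
  have D2: "\<And>t. (Z 2 has_real_derivative Z 3 t) (at t)" using D[of 2] by (simp add: numeral_3_eq_3 numeral_2_eq_2)
  show "deriv (\<lambda>t. ln (Z 0 t) + \<alpha> + \<beta> * t) = (\<lambda>t. Z 1 t / Z 0 t + \<beta>)"
  proof
    fix t
    have "((\<lambda>t. ln (Z 0 t) + \<alpha> + \<beta> * t) has_real_derivative Z 1 t / Z 0 t + \<beta>) (at t)"
      using pos[of t] D0[of t]
      by (auto intro!: derivative_eq_intros simp: field_simps)
    thus "deriv (\<lambda>t. ln (Z 0 t) + \<alpha> + \<beta> * t) t = Z 1 t / Z 0 t + \<beta>" by (rule DERIV_imp_deriv)
  qed
  show "deriv (\<lambda>t. Z 1 t / Z 0 t + \<beta>) = (\<lambda>t. (Z 2 t * Z 0 t - Z 1 t * Z 1 t) / (Z 0 t)^2)"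
  proof
    fix t
    have "((\<lambda>t. Z 1 t / Z 0 t + \<beta>) has_real_derivative (Z 2 t * Z 0 t - Z 1 t * Z 1 t) / (Z 0 t)^2) (at t)"
      using pos[of t] D0[of t] D1[of t]
      by (auto intro!: derivative_eq_intros simp: field_simps power2_eq_square)
    thus "deriv (\<lambda>t. Z 1 t / Z 0 t + \<beta>) t = (Z 2 t * Z 0 t - Z 1 t * Z 1 t) / (Z 0 t)^2" by (rule DERIV_imp_deriv)
  qed
  show "deriv (\<lambda>t. (Z 2 t * Z 0 t - Z 1 t * Z 1 t) / (Z 0 t)^2)
          = (\<lambda>t. (Z 3 t * (Z 0 t)^2 - 3 * Z 0 t * Z 1 t * Z 2 t + 2 * (Z 1 t)^3) / (Z 0 t)^3)"
  proof
    fix t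
    have "((\<lambda>t. (Z 2 t * Z 0 t - Z 1 t * Z 1 t) / (Z 0 t)^2) has_real_derivative
       (Z 3 t * (Z 0 t)^2 - 3 * Z 0 t * Z 1 t * Z 2 t + 2 * (Z 1 t)^3) / (Z 0 t)^3) (at t)"
      using pos[of t] D0[of t] D1[of t] D2[of t]
      apply (auto intro!: derivative_eq_intros simp: field_simps power2_eq_square)
      by algebra
    thus "deriv (\<lambda>t. (Z 2 t * Z 0 t - Z 1 t * Z 1 t) / (Z 0 t)^2) t =
       (Z 3 t * (Z 0 t)^2 - 3 * Z 0 t * Z 1 t * Z 2 t + 2 * (Z 1 t)^3) / (Z 0 t)^3" by (rule DERIV_imp_deriv)
  qed
qed

lemma moment_ineq:
  fixes S :: "'i set" and c d :: "'i \<Rightarrow> real"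
  assumes v0: "v0 > 0" and fin: "finite S" and B: "\<forall>j\<in>S. \<bar>d j\<bar> \<le> B" and B0: "B \<ge> 0"
  defines "Z \<equiv> Zf v0 S c d"
  shows "\<bar>(Z 3 t * (Z 0 t)^2 - 3 * Z 0 t * Z 1 t * Z 2 t + 2 * (Z 1 t)^3) / (Z 0 t)^3\<bar>
         \<le> 2 * B * ((Z 2 t * Z 0 t - Z 1 t * Z 1 t) / (Z 0 t)^2)"
proof -
  define e where "e j = exp (c j + t * d j)" for j
  have epos: "e j > 0" for j unfolding e_def by simp
  define S0 where "S0 = (\<Sum>j\<in>S. e j)"
  define Z0 Z1 Z2 Z3 where "Z0 = Z 0 t" and "Z1 = Z 1 t" and "Z2 = Z 2 t" and "Z3 = Z 3 t"
  have S0nn: "S0 \<ge> 0" unfolding S0_def using epos by (simp add: sum_nonneg less_imp_le)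
  have hZ0: "Z0 = v0 + S0" unfolding Z0_def Z_def Zf_def S0_def e_def by simp
  have hZ1: "Z1 = (\<Sum>j\<in>S. e j * d j)" unfolding Z1_def Z_def Zf_def e_def by (simp add: mult_ac)
  have hZ2: "Z2 = (\<Sum>j\<in>S. e j * d j ^ 2)" unfolding Z2_def Z_def Zf_def e_def by (simp add: mult_ac)
  have hZ3: "Z3 = (\<Sum>j\<in>S. e j * d j ^ 3)" unfolding Z3_def Z_def Zf_def e_def by (simp add: mult_ac)
  have Z0pos: "Z0 > 0" using hZ0 S0nn v0 by simp
  define \<mu> where "\<mu> = Z1 / Z0"
  have "\<bar>Z1\<bar> \<le> (\<Sum>j\<in>S. e j * B)" unfolding hZ1
    by (rule order_trans[OF sum_abs sum_mono]) (use B epos[THEN less_imp_le] in \<open>auto simp: abs_mult intro!: mult_left_mono\<close>)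
  also have "\<dots> = B * S0" unfolding S0_def by (simp add: sum_distrib_left mult.commute)
  also have "\<dots> \<le> B * Z0" using hZ0 v0 B0 by (simp add: mult_left_mono)
  finally have mub: "\<bar>\<mu>\<bar> \<le> B" unfolding \<mu>_def using Z0pos by (simp add: abs_div divide_le_eq)
  define T where "T = v0 * (- \<mu>)^3 + (\<Sum>j\<in>S. e j * (d j - \<mu>)^3)"
  define V where "V = v0 * \<mu>^2 + (\<Sum>j\<in>S. e j * (d j - \<mu>)^2)"
  have s3: "(\<Sum>j\<in>S. e j * (d j - \<mu>)^3) = Z3 - 3*\<mu>*Z2 + 3*\<mu>^2*Z1 - \<mu>^3*S0"
  proof -
    have "(\<Sum>j\<in>S. e j * (d j - \<mu>)^3) = (\<Sum>j\<in>S. e j * d j ^ 3 - 3*\<mu>*(e j * d j^2) + 3*\<mu>^2*(e j * d j) - \<mu>^3 * e j)"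
      by (rule sum.cong) (auto simp: power3_eq_cube power2_eq_square algebra_simps)
    also have "\<dots> = Z3 - 3*\<mu>*Z2 + 3*\<mu>^2*Z1 - \<mu>^3*S0"
      unfolding hZ1 hZ2 hZ3 S0_def by (simp add: sum.distrib sum_subtractf sum_distrib_left)
    finally show ?thesis .
  qed
  have s2: "(\<Sum>j\<in>S. e j * (d j - \<mu>)^2) = Z2 - 2*\<mu>*Z1 + \<mu>^2*S0"
  proof -
    have "(\<Sum>j\<in>S. e j * (d j - \<mu>)^2) = (\<Sum>j\<in>S. e j * d j ^ 2 - 2*\<mu>*(e j * d j) + \<mu>^2 * e j)"
      by (rule sum.cong) (auto simp: power2_eq_square algebra_simps)
    also have "\<dots> = Z2 - 2*\<mu>*Z1 + \<mu>^2*S0"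
      unfolding hZ1 hZ2 S0_def by (simp add: sum.distrib sum_subtractf sum_distrib_left)
    finally show ?thesis .
  qed
  have S0eq: "S0 = Z0 - v0" using hZ0 by simp
  have Teq: "(Z3 * Z0^2 - 3 * Z0 * Z1 * Z2 + 2 * Z1^3) / Z0^3 = T / Z0"
    unfolding T_def s3 S0eq using Z0pos
    by (simp add: \<mu>_def field_simps power3_eq_cube power2_eq_square) algebra?
  have Veq: "(Z2 * Z0 - Z1 * Z1) / Z0^2 = V / Z0"
    unfolding V_def s2 S0eq using Z0pos
    by (simp add: \<mu>_def field_simps power3_eq_cube power2_eq_square) algebra?
  have "\<bar>T\<bar> \<le> v0 * \<bar>\<mu>\<bar>^3 + (\<Sum>j\<in>S. e j * \<bar>d j - \<mu>\<bar>^3)"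
    unfolding T_def
    by (rule order_trans[OF abs_triangle_ineq add_mono]) 
       (use v0 epos[THEN less_imp_le] in \<open>auto simp: abs_mult power_abs intro!: order_trans[OF sum_abs] sum_mono\<close>)
  also have "\<dots> \<le> v0 * (2*B * \<mu>^2) + (\<Sum>j\<in>S. e j * (2*B * (d j - \<mu>)^2))"
  proof (rule add_mono)
    have "\<bar>\<mu>\<bar>^3 = \<bar>\<mu>\<bar> * \<mu>^2" by (simp add: power3_eq_cube power2_eq_square abs_mult_self)
    also have "\<dots> \<le> 2*B * \<mu>^2" using mub B0 by (intro mult_right_mono) auto
    finally show "v0 * \<bar>\<mu>\<bar>^3 \<le> v0 * (2*B * \<mu>^2)" using v0 by simp
    show "(\<Sum>j\<in>S. e j * \<bar>d j - \<mu>\<bar>^3) \<le> (\<Sum>j\<in>S. e j * (2*B * (d j - \<mu>)^2))"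
    proof (rule sum_mono)
      fix j assume j: "j \<in> S"
      have "\<bar>d j - \<mu>\<bar> \<le> 2*B" using B j mub by auto
      moreover have "\<bar>d j - \<mu>\<bar>^3 = \<bar>d j - \<mu>\<bar> * (d j - \<mu>)^2"
        by (simp add: power3_eq_cube power2_eq_square abs_mult_self)
      ultimately have "\<bar>d j - \<mu>\<bar>^3 \<le> 2*B * (d j - \<mu>)^2"
        by (simp add: mult_right_mono)
      thus "e j * \<bar>d j - \<mu>\<bar>^3 \<le> e j * (2*B * (d j - \<mu>)^2)" using epos[of j] by simp
    qed
  qed
  also have "\<dots> = 2 * B * V" unfolding V_def by (simp add: sum_distrib_left algebra_simps)
  finally have TV: "\<bar>T\<bar> \<le> 2 * B * V" .
  have "\<bar>T / Z0\<bar> \<le> 2 * B * (V / Z0)" using TV Z0pos by (simp add: abs_div divide_right_mono)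
  thus ?thesis using Teq Veq unfolding Z0_def Z1_def Z2_def Z3_def by simp
qed

theorem propositionD1:
  fixes v0 :: real and S :: "'i set" and x :: "'i \<Rightarrow> 'a::euclidean_space"
    and y :: "'i option \<Rightarrow> real"
  assumes "v0 > 0"
    and "finite S" and "S \<noteq> {}"
    and "\<forall>i\<in>S. norm (x i) \<le> 1"
    and "\<forall>k\<in>insert None (Some ` S). y k \<in> {0, 1}"
    and "(\<Sum>k\<in>insert None (Some ` S). y k) = 1"
  shows "self_concordant_like (3 * sqrt 2) (mnl_loss v0 S x y)"
  unfolding self_concordant_like_def
proof (intro allI)
  fix a b :: 'a and s :: real
  note v0 = assms(1) and fin = assms(2) and xb = assms(4) and ysum = assms(6)
  define c where "c j = x j \<bullet> a" for j
  define d where "d j = x j \<bullet> b" for j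
  define Z where "Z = Zf v0 S c d"
  define \<alpha> where "\<alpha> = -(y None * ln v0 + (\<Sum>i\<in>S. y (Some i) * c i))"
  define \<beta> where "\<beta> = -(\<Sum>i\<in>S. y (Some i) * d i)"
  have pos: "\<And>t. Z 0 t > 0" unfolding Z_def using Zf0_pos[OF v0] by blast
  have sumsplit: "\<And>f. (\<Sum>k\<in>insert None (Some ` S). f k) = f None + (\<Sum>i\<in>S. f (Some i))"
    using fin by (simp add: sum.reindex)
  have ys: "y None + (\<Sum>i\<in>S. y (Some i)) = 1" using ysum sumsplit[of y] by simp
  have feq: "(\<lambda>t. mnl_loss v0 S x y (a + t *\<^sub>R b)) = (\<lambda>t. ln (Z 0 t) + \<alpha> + \<beta> * t)"
  proof
    fix t
    have ip: "\<And>j. x j \<bullet> (a + t *\<^sub>R b) = c j + t * d j"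
      unfolding c_def d_def by (simp add: inner_add_right)
    have Zt: "v0 + (\<Sum>j\<in>S. exp (x j \<bullet> (a + t *\<^sub>R b))) = Z 0 t"
      unfolding Z_def Zf_def ip by simp
    have "mnl_loss v0 S x y (a + t *\<^sub>R b) =
        - (y None * (ln v0 - ln (Z 0 t)) + (\<Sum>i\<in>S. y (Some i) * (c i + t * d i - ln (Z 0 t))))"
      unfolding mnl_loss_def sumsplit mnl_prob_def Zt using pos[of t] v0
      by (simp add: ln_div ip)
    also have "\<dots> = (y None + (\<Sum>i\<in>S. y (Some i))) * ln (Z 0 t) + \<alpha> + \<beta> * t"
      unfolding \<alpha>_def \<beta>_def
      by (simp add: algebra_simps sum.distrib sum_subtractf sum_distrib_left sum_distrib_right)
    finally show "mnl_loss v0 S x y (a + t *\<^sub>R b) = ln (Z 0 t) + \<alpha> + \<beta> * t" using ys by simp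
  qed
  have B: "\<forall>j\<in>S. \<bar>d j\<bar> \<le> norm b"
  proof
    fix j assume "j \<in> S"
    have "\<bar>d j\<bar> \<le> norm (x j) * norm b" unfolding d_def by (rule Cauchy_Schwarz_ineq2)
    also have "\<dots> \<le> 1 * norm b" using xb \<open>j \<in> S\<close> by (intro mult_right_mono) auto
    finally show "\<bar>d j\<bar> \<le> norm b" by simp
  qed
  have d3: "(deriv ^^ 3) (\<lambda>t. mnl_loss v0 S x y (a + t *\<^sub>R b)) =
      (\<lambda>t. (Z 3 t * (Z 0 t)^2 - 3 * Z 0 t * Z 1 t * Z 2 t + 2 * (Z 1 t)^3) / (Z 0 t)^3)"
  proof -
    have D3: "(deriv ^^ 3) g = deriv (deriv (deriv g))" for g :: "real \<Rightarrow> real" by (simp add: numeral_3_eq_3)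
    show ?thesis unfolding D3 feq Z_def derivs(1)[OF v0] derivs(2)[OF v0] derivs(3)[OF v0] ..
  qed
  have d2: "(deriv ^^ 2) (\<lambda>t. mnl_loss v0 S x y (a + t *\<^sub>R b)) =
      (\<lambda>t. (Z 2 t * Z 0 t - Z 1 t * Z 1 t) / (Z 0 t)^2)"
  proof -
    have D2: "(deriv ^^ 2) g = deriv (deriv g)" for g :: "real \<Rightarrow> real" by (simp add: numeral_2_eq_2)
    show ?thesis unfolding D2 feq Z_def derivs(1)[OF v0] derivs(2)[OF v0] ..
  qed
  define E where "E = (Z 2 s * Z 0 s - Z 1 s * Z 1 s) / (Z 0 s)^2"
  have ineq: "\<bar>(Z 3 s * (Z 0 s)^2 - 3 * Z 0 s * Z 1 s * Z 2 s + 2 * (Z 1 s)^3) / (Z 0 s)^3\<bar> \<le> 2 * norm b * E"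
    unfolding E_def Z_def by (rule moment_ineq[OF v0 fin B norm_ge_zero])
  hence q: "2 * norm b * E \<ge> 0" by linarith
  have "sqrt 2 \<ge> 1" by simp
  hence "2 * norm b * E \<le> 3 * sqrt 2 * norm b * E"
  proof -
    have k: "1 \<le> 3 * sqrt 2 / 2" using \<open>sqrt 2 \<ge> 1\<close> by linarith
    have "1 * (2 * norm b * E) \<le> (3 * sqrt 2 / 2) * (2 * norm b * E)"
      by (rule mult_right_mono[OF k q])
    thus ?thesis by (simp add: mult_ac)
  qed
  thus "\<bar>(deriv ^^ 3) (\<lambda>t. mnl_loss v0 S x y (a + t *\<^sub>R b)) s\<bar>
          \<le> 3 * sqrt 2 * norm b * (deriv ^^ 2) (\<lambda>t. mnl_loss v0 S x y (a + t *\<^sub>R b)) s"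
    using ineq unfolding d3 d2 E_def by linarith
qed

end
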